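(* For $\alpha_1,\alpha_2>0$, let $V_{\alpha_i}=\frac{1}{4(1+2\alpha_i)}$ be the variance of the Beta$(\alpha_i,\alpha_i)$ law. Then $V_{\alpha_1}\ge V_{\alpha_2}$ if and only if $F_{\alpha_1}\preceq_{\text{ssd}}F_{\alpha_2}$.
   Context: $F_\alpha$ denotes the distribution function of the symmetric Beta$(\alpha,\alpha)$ law on $[0,1]$. $F_1\preceq_{\text{ssd}}F_2$ means $\int_0^xF_2(t)dt\le\int_0^xF_1(t)dt$ for all $x\in[0,1]$. *)

theory Defs
  imports "HOL-Analysis.Analysis"
begin

definition beta_density :: "real \<Rightarrow> real \<Rightarrow> real" where
  "beta_density a t = t powr (a - 1) * (1 - t) powr (a - 1) / Beta a a"

definition beta_cdf :: "real \<Rightarrow> real \<Rightarrow> real" where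
  "beta_cdf a x = integral {0..x} (beta_density a)"

definition beta_var :: "real \<Rightarrow> real" where
  "beta_var a = 1 / (4 * (1 + 2 * a))"

definition ssd_le :: "(real \<Rightarrow> real) \<Rightarrow> (real \<Rightarrow> real) \<Rightarrow> bool" where
  "ssd_le F1 F2 \<longleftrightarrow> (\<forall>x\<in>{0..1}. integral {0..x} F2 \<le> integral {0..x} F1)"

end

theory Submission imports Defs begin

lemma Beta_aa_pos: "a > 0 \<Longrightarrow> Beta a a > (0::real)"
  unfolding Beta_def using Gamma_real_pos[of a] Gamma_real_pos[of "a+a"] by simp

lemma dens_nonneg: "0 \<le> t \<Longrightarrow> t \<le> 1 \<Longrightarrow> a > 0 \<Longrightarrow> beta_density a t \<ge> 0"
  unfolding beta_density_def using Beta_aa_pos[of a] by simp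

lemma dens_sym: "beta_density a (1 - t) = beta_density a t"
  unfolding beta_density_def by simp

lemma dens_has_int: "a > 0 \<Longrightarrow> (beta_density a has_integral 1) {0..1}"
proof -
  assume a: "a > 0"
  have "((\<lambda>t. t powr (a - 1) * (1 - t) powr (a - 1) / Beta a a) has_integral Beta a a / Beta a a) {0..1}"
    by (rule has_integral_divide[OF has_integral_Beta_real[OF a a]])
  thus ?thesis using Beta_aa_pos[OF a] unfolding beta_density_def[abs_def] by simp
qed

lemma dens_int: "a > 0 \<Longrightarrow> 0 \<le> c \<Longrightarrow> d \<le> 1 \<Longrightarrow> beta_density a integrable_on {c..d}"
  using dens_has_int integrable_subinterval_real by (metis atLeastatMost_subset_iff has_integral_integrable order_trans)

lemma reflect01: "integral {y..1} (g::real\<Rightarrow>real) = integral {0..1-y} (\<lambda>s. g (1 - s :: real))"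
proof -
  have "integral {-(0)..-(y-1)} (\<lambda>s. (\<lambda>u. g (u+1)) (-s)) = integral {y-1..0} (\<lambda>u. g (u+1))"
    using Henstock_Kurzweil_Integration.integral_reflect_real[where a="y-1" and b=0 and f="\<lambda>u. g (u+1)"] by simp
  moreover have "integral {y-1..1-1} (\<lambda>u. g (u+1)) = integral {y..1} g"
    by (rule integral_shift_real_ivl)
  ultimately show ?thesis by (simp add: add.commute)
qed

lemma cdf_sym: assumes a: "a > 0" and x: "0 \<le> x" "x \<le> 1"
  shows "beta_cdf a (1 - x) = 1 - beta_cdf a x"
proof -
  have "beta_cdf a (1 - x) = integral {0..1-x} (\<lambda>s. beta_density a (1 - s))"
    unfolding beta_cdf_def by (simp add: dens_sym)
  also have "\<dots> = integral {x..1} (beta_density a)" by (simp add: reflect01)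
  also have "\<dots> = 1 - beta_cdf a x"
    using Henstock_Kurzweil_Integration.integral_combine[OF x has_integral_integrable[OF dens_has_int[OF a]]]
      integral_unique[OF dens_has_int[OF a]] unfolding beta_cdf_def by linarith
  finally show ?thesis .
qed

lemma cdf_half: "a > 0 \<Longrightarrow> beta_cdf a (1/2) = 1/2"
  using cdf_sym[of a "1/2"] by simp

lemma cdf_cont: "a > 0 \<Longrightarrow> continuous_on {0..1} (beta_cdf a)"
  unfolding beta_cdf_def[abs_def]
  by (rule indefinite_integral_continuous_1, rule has_integral_integrable, erule dens_has_int)

lemma cdf_int: "a > 0 \<Longrightarrow> 0 \<le> c \<Longrightarrow> d \<le> 1 \<Longrightarrow> beta_cdf a integrable_on {c..d}"
  by (meson atLeastatMost_subset_iff cdf_cont continuous_on_subset integrable_continuous_interval order_refl)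

lemma intcdf_reflect: assumes a: "a > 0" and y: "0 \<le> y" "y \<le> 1"
  shows "integral {0..y} (beta_cdf a) = y - 1/2 + integral {0..1-y} (beta_cdf a)"
proof -
  have R: "integral {z..1} (beta_cdf a) = (1 - z) - integral {0..1-z} (beta_cdf a)"
    if z: "0 \<le> z" "z \<le> 1" for z
  proof -
    have "integral {z..1} (beta_cdf a) = integral {0..1-z} (\<lambda>s. beta_cdf a (1 - s))"
      by (rule reflect01)
    also have "\<dots> = integral {0..1-z} (\<lambda>s. 1 - beta_cdf a s)"
      by (rule integral_cong) (use z a cdf_sym in auto)
    also have "\<dots> = integral {0..1-z} (\<lambda>s. 1) - integral {0..1-z} (beta_cdf a)"
      by (rule integral_diff) (use z a cdf_int in auto)
    also have "\<dots> = (1 - z) - integral {0..1-z} (beta_cdf a)" using z by simp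
    finally show ?thesis .
  qed
  have C: "integral {0..z} (beta_cdf a) + integral {z..1} (beta_cdf a) = integral {0..1} (beta_cdf a)"
    if z: "0 \<le> z" "z \<le> 1" for z
    by (rule Henstock_Kurzweil_Integration.integral_combine) (use z a cdf_int in auto)
  have "integral {0..1} (beta_cdf a) = 1/2" using R[of 0] C[of 0] by simp
  thus ?thesis using R[OF y] C[OF y] by linarith
qed


lemma dens_alt: "0 < s \<Longrightarrow> s < 1 \<Longrightarrow> beta_density a s = (s*(1-s)) powr (a-1) / Beta a a"
  unfolding beta_density_def by (simp add: powr_mult)

lemma dens_zero: "beta_density a 0 = 0"
  unfolding beta_density_def by simp

lemma ratio:
  assumes "0 < s" "s < 1" "a > 0" "b > 0"
  shows "beta_density a s = (Beta b b / Beta a a) * (s*(1-s)) powr (a-b) * beta_density b s"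
proof -
  have "(s*(1-s)) powr (a-b) * (s*(1-s)) powr (b-1) = (s*(1-s)) powr (a-1)"
    by (simp add: powr_add[symmetric])
  moreover have "Beta b b > 0" using Beta_aa_pos assms by simp
  ultimately show ?thesis using assms
    unfolding dens_alt[OF assms(1,2), of a] dens_alt[OF assms(1,2), of b]
    by (simp add: field_simps mult.assoc[symmetric])
qed

lemma prod_mono: "0 \<le> s \<Longrightarrow> s \<le> x \<Longrightarrow> x \<le> 1/2 \<Longrightarrow> s*(1-s) \<le> x*(1-(x::real))"
proof -
  assume h: "0 \<le> s" "s \<le> x" "x \<le> 1/2"
  have "x*(1-x) - s*(1-s) = (x-s)*(1-x-s)" by algebra
  moreover have "(x-s)*(1-x-s) \<ge> 0" using h by (intro mult_nonneg_nonneg) auto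
  ultimately show ?thesis by linarith
qed

lemma prod_smono: "0 \<le> s \<Longrightarrow> s < x \<Longrightarrow> x \<le> 1/2 \<Longrightarrow> s*(1-s) < x*(1-(x::real))"
proof -
  assume h: "0 \<le> s" "s < x" "x \<le> 1/2"
  have "x*(1-x) - s*(1-s) = (x-s)*(1-x-s)" by algebra
  moreover have "(x-s)*(1-x-s) > 0" using h by (intro mult_pos_pos) auto
  ultimately show ?thesis by linarith
qed

lemma dens_cont: "b > 0 \<Longrightarrow> 0 < c \<Longrightarrow> d < 1 \<Longrightarrow> continuous_on {c..d} (beta_density b)"
  unfolding beta_density_def[abs_def]
  using Beta_aa_pos[of b] by (intro continuous_intros) auto

lemma dens_pos: "b > 0 \<Longrightarrow> 0 < t \<Longrightarrow> t < 1 \<Longrightarrow> beta_density b t > 0"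
  unfolding beta_density_def using Beta_aa_pos[of b] by simp

lemma int_pos: assumes b: "b > 0" and cd: "0 < c" "c < d" "d < 1"
  shows "integral {c..d} (beta_density b) > 0"
proof -
  have "integral {c..d} (\<lambda>_. 0::real) < integral {c..d} (beta_density b)"
    by (rule integral_less_real) (use b cd dens_cont dens_pos in auto)
  thus ?thesis by simp
qed

lemma cdf_pos: assumes b: "b > 0" and x: "0 < x" "x \<le> 1/2"
  shows "beta_cdf b x > 0"
proof -
  have "integral {0..x/2} (beta_density b) + integral {x/2..x} (beta_density b) = beta_cdf b x"
    unfolding beta_cdf_def
    by (rule Henstock_Kurzweil_Integration.integral_combine) (use x b dens_int in auto)
  moreover have "integral {0..x/2} (beta_density b) \<ge> 0"
    by (rule integral_nonneg) (use x b dens_int dens_nonneg in auto)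
  moreover have "integral {x/2..x} (beta_density b) > 0" by (rule int_pos) (use x b in auto)
  ultimately show ?thesis by linarith
qed

lemma tail_eq: assumes b: "b > 0" and x: "0 \<le> x" "x \<le> 1/2"
  shows "integral {x..1/2} (beta_density b) = 1/2 - beta_cdf b x"
proof -
  have "integral {0..x} (beta_density b) + integral {x..1/2} (beta_density b) = beta_cdf b (1/2)"
    unfolding beta_cdf_def
    by (rule Henstock_Kurzweil_Integration.integral_combine) (use x b dens_int in auto)
  thus ?thesis using cdf_half[OF b] unfolding beta_cdf_def by linarith
qed

lemma cdf_lt_half: assumes b: "b > 0" and x: "0 \<le> x" "x < 1/2"
  shows "beta_cdf b x < 1/2"
proof (cases "x = 0")
  case True thus ?thesis unfolding beta_cdf_def by simp
next
  case False
  thus ?thesis using tail_eq[OF b, of x] int_pos[OF b, of x "1/2"] x by simp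
qed

definition kf :: "real \<Rightarrow> real \<Rightarrow> real \<Rightarrow> real" where
  "kf a b x = (Beta b b / Beta a a) * (x*(1-x)) powr (a-b)"

lemma kf_smono: assumes "0 < a" "a < b" "0 < s" "s < x" "x \<le> 1/2"
  shows "kf a b x < kf a b s"
proof -
  have "(x*(1-x)) powr (a-b) < (s*(1-s)) powr (a-b)"
    by (rule powr_less_mono2_neg) (use assms prod_smono[of s x] in auto)
  moreover have "Beta b b / Beta a a > 0" using Beta_aa_pos assms by simp
  ultimately show ?thesis unfolding kf_def by (rule mult_strict_left_mono)
qed

lemma key_ineqs: assumes a: "0 < a" "a < b" and x: "0 < x" "x \<le> 1/2"
  shows "kf a b x * beta_cdf b x \<le> beta_cdf a x"
    and "1/2 - beta_cdf a x \<le> kf a b x * (1/2 - beta_cdf b x)"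
proof -
  have b: "b > 0" using a by simp
  have Cpos: "Beta b b / Beta a a > 0" using Beta_aa_pos a by simp
  have lo: "kf a b x * beta_density b s \<le> beta_density a s" if s: "s \<in> {0..x}" for s
  proof (cases "s = 0")
    case True thus ?thesis by (simp add: dens_zero)
  next
    case False
    hence "(x*(1-x)) powr (a-b) \<le> (s*(1-s)) powr (a-b)"
      using s x a by (intro powr_mono2') (auto intro!: prod_mono mult_pos_pos)
    hence "kf a b x * beta_density b s \<le> (Beta b b / Beta a a) * (s*(1-s)) powr (a-b) * beta_density b s"
      unfolding kf_def using Cpos dens_nonneg[of s b] s x b
      by (intro mult_right_mono mult_left_mono) auto
    thus ?thesis using ratio[of s a b] False s x a by simp
  qed
  have hi: "beta_density a s \<le> kf a b x * beta_density b s" if s: "s \<in> {x..1/2}" for s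
  proof -
    have "(s*(1-s)) powr (a-b) \<le> (x*(1-x)) powr (a-b)"
      using s x a by (intro powr_mono2') (auto intro!: prod_mono mult_pos_pos)
    hence "(Beta b b / Beta a a) * (s*(1-s)) powr (a-b) * beta_density b s \<le> kf a b x * beta_density b s"
      unfolding kf_def using Cpos dens_nonneg[of s b] s x b
      by (intro mult_right_mono mult_left_mono) auto
    thus ?thesis using ratio[of s a b] s x a by simp
  qed
  have "integral {0..x} (\<lambda>s. kf a b x * beta_density b s) \<le> integral {0..x} (beta_density a)"
    by (rule integral_le) (use lo x a b dens_int integrable_on_mult_right[OF dens_int[of b 0 x]] in auto)
  thus "kf a b x * beta_cdf b x \<le> beta_cdf a x" unfolding beta_cdf_def by simp
  have "integral {x..1/2} (beta_density a) \<le> integral {x..1/2} (\<lambda>s. kf a b x * beta_density b s)"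
    by (rule integral_le) (use hi x a b dens_int integrable_on_mult_right[OF dens_int[of b x "1/2"]] in auto)
  thus "1/2 - beta_cdf a x \<le> kf a b x * (1/2 - beta_cdf b x)"
    using tail_eq[of a x] tail_eq[of b x] a x by simp
qed

lemma H_nonneg: assumes a: "0 < a" "a < b" and x: "0 \<le> x" "x \<le> 1/2"
  shows "beta_cdf b x \<le> beta_cdf a x"
proof (cases "x = 0")
  case True thus ?thesis unfolding beta_cdf_def by simp
next
  case False
  hence x': "0 < x" using x by simp
  note K = key_ineqs[OF a x' x(2)]
  have F0: "beta_cdf b x \<ge> 0" using cdf_pos[of b x] a x' x by simp
  have F1: "beta_cdf b x \<le> 1/2"
  proof (cases "x < 1/2")
    case True thus ?thesis using cdf_lt_half[of b x] a x by simp
  next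
    case False hence xh: "x = 1/2" using x by simp
    have "beta_cdf b (1/2) = 1/2" using cdf_half[of b] a by simp
    thus ?thesis unfolding xh by simp
  qed
  show ?thesis
  proof (cases "kf a b x \<ge> 1")
    case True
    hence "beta_cdf b x \<le> kf a b x * beta_cdf b x" using F0 by (simp add: mult_le_cancel_right1)
    thus ?thesis using K by linarith
  next
    case False
    hence "(1 - kf a b x) * (1/2 - beta_cdf b x) \<ge> 0" using F1
      by (intro mult_nonneg_nonneg) auto
    hence "kf a b x * (1/2 - beta_cdf b x) \<le> 1/2 - beta_cdf b x"
      by (simp add: algebra_simps)
    thus ?thesis using K by linarith
  qed
qed

lemma H_pos1: assumes a: "0 < a" "a < b" and x: "0 < x" "x < 1/2" and k: "kf a b x > 1"
  shows "beta_cdf b x < beta_cdf a x"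
proof -
  note K = key_ineqs[OF a x(1) less_imp_le[OF x(2)]]
  have F0: "beta_cdf b x > 0" using cdf_pos[of b x] a x by simp
  hence "beta_cdf b x < kf a b x * beta_cdf b x" using k by simp
  thus ?thesis using K by linarith
qed

lemma H_pos2: assumes a: "0 < a" "a < b" and x: "0 < x" "x < 1/2" and k: "kf a b x < 1"
  shows "beta_cdf b x < beta_cdf a x"
proof -
  note K = key_ineqs[OF a x(1) less_imp_le[OF x(2)]]
  have F1: "beta_cdf b x < 1/2" using cdf_lt_half[of b x] a x by simp
  hence "kf a b x * (1/2 - beta_cdf b x) < 1/2 - beta_cdf b x" using k by simp
  thus ?thesis using K by linarith
qed

lemma G_le_half: assumes a: "0 < a" "a < b" and y: "0 \<le> y" "y \<le> 1/2"
  shows "integral {0..y} (beta_cdf b) \<le> integral {0..y} (beta_cdf a)"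
  by (rule integral_le) (use a y cdf_int H_nonneg in auto)

lemma G_le: assumes a: "0 < a" "a < b" and y: "0 \<le> y" "y \<le> 1"
  shows "integral {0..y} (beta_cdf b) \<le> integral {0..y} (beta_cdf a)"
proof (cases "y \<le> 1/2")
  case True thus ?thesis using G_le_half[OF a] y by simp
next
  case False
  thus ?thesis using G_le_half[OF a, of "1-y"] intcdf_reflect[of a y] intcdf_reflect[of b y] a y
    by simp
qed

lemma G_lt: assumes a: "0 < a" "a < b"
  shows "integral {0..1/2} (beta_cdf b) < integral {0..1/2} (beta_cdf a)"
proof -
  have b: "b > 0" using a by simp
  have split: "integral {0..1/4} (beta_cdf c) + integral {1/4..1/2} (beta_cdf c) = integral {0..1/2} (beta_cdf c)"
    if "c > 0" for c
    by (rule Henstock_Kurzweil_Integration.integral_combine) (use that cdf_int in auto)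
  have cc: "continuous_on {u..v} (beta_cdf c)" if "c > 0" "0 \<le> u" "v \<le> 1" for c u v
    using cdf_cont[OF that(1)] that by (auto elim: continuous_on_subset)
  have le1: "integral {0..1/4} (beta_cdf b) \<le> integral {0..1/4} (beta_cdf a)"
    using G_le_half[OF a, of "1/4"] by simp
  have le2: "integral {1/4..1/2} (beta_cdf b) \<le> integral {1/4..1/2} (beta_cdf a)"
    by (rule integral_le) (use a cdf_int H_nonneg in auto)
  show ?thesis
  proof (cases "kf a b (1/4) \<ge> 1")
    case True
    have "integral {0..1/4} (beta_cdf b) < integral {0..1/4} (beta_cdf a)"
    proof (rule integral_less_real)
      fix x :: real assume x: "x \<in> {0<..<1/4}"
      have "kf a b x > 1" using kf_smono[OF a, of x "1/4"] x True by auto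
      thus "beta_cdf b x < beta_cdf a x" using H_pos1[OF a] x by auto
    qed (use cc a b in auto)
    thus ?thesis using split[OF a(1)] split[OF b] le2 by linarith
  next
    case False
    have "integral {1/4..1/2} (beta_cdf b) < integral {1/4..1/2} (beta_cdf a)"
    proof (rule integral_less_real)
      fix x :: real assume x: "x \<in> {1/4<..<1/2}"
      have "kf a b x < 1" using kf_smono[OF a, of "1/4" x] x False by auto
      thus "beta_cdf b x < beta_cdf a x" using H_pos2[OF a] x by auto
    qed (use cc a b in auto)
    thus ?thesis using split[OF a(1)] split[OF b] le1 by linarith
  qed
qed

theorem corollary3:
  fixes a1 a2 :: real
  assumes "a1 > 0" and "a2 > 0"
  shows "beta_var a1 \<ge> beta_var a2 \<longleftrightarrow> ssd_le (beta_cdf a1) (beta_cdf a2)"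
proof -
  have "beta_var a1 \<ge> beta_var a2 \<longleftrightarrow> a1 \<le> a2"
    using assms unfolding beta_var_def by (simp add: frac_le_eq divide_le_eq field_simps)
  moreover have "a1 \<le> a2 \<longleftrightarrow> ssd_le (beta_cdf a1) (beta_cdf a2)"
  proof
    assume "a1 \<le> a2"
    thus "ssd_le (beta_cdf a1) (beta_cdf a2)"
      unfolding ssd_le_def using G_le[of a1 a2] assms by (cases "a1 = a2") auto
  next
    assume "ssd_le (beta_cdf a1) (beta_cdf a2)"
    hence "integral {0..1/2} (beta_cdf a2) \<le> integral {0..1/2} (beta_cdf a1)"
      unfolding ssd_le_def by auto
    thus "a1 \<le> a2" using G_lt[of a2 a1] assms by force
  qed
  ultimately show ?thesis by simp
qed

end
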